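(* Consider the liquidation problem of the context, let $t\in[0,T)$ and $x\in\mathbb{R}^n$, and write $v(t,x;\Lambda)$ for the value function as a function of the price impact matrix. (i) $v(t,x;\Lambda)$ is increasing in $\Lambda$, i.e. $\Lambda\le\tilde\Lambda$ (in the Loewner order) implies $v(t,x;\Lambda)\le v(t,x;\tilde\Lambda)$. (ii) Let $\Lambda=\operatorname{diag}(\lambda_1,\dots,\lambda_n)$. For $i=1,\dots,n$, $v(t,x;\lambda_i)/\lambda_i$ is decreasing in $\lambda_i$ (the other parameters held fixed).
   Context: Model: fix $T>0$, $n\ge1$, $\alpha\ge0$, a symmetric positive definite $\Lambda\in\mathbb{R}^{n\times n}$ and a symmetric nonnegative definite $\Sigma$. On a filtered probability space, $\tilde P$ is an $n$-dimensional square-integrable càdlàg martingale with $\mathrm{Cov}(\tilde P_i(t),\tilde P_j(t))=t\Sigma_{i,j}$, and $\pi=(\pi_1,\dots,\pi_n)$ has independent Poisson components with intensities $\theta_i\ge0$, independent of $\tilde P$; filtration = completion of $\sigma(\tilde P(s),\pi(r):s\le t,r<t)$. Strategies $u=(\xi,\eta)$ on $[t,T)$ ($\xi$ progressively measurable, $\eta$ predictable) control $dX^u=-\xi ds-\eta\,d\pi$, $X^u(t)=x$; $\mathbb{A}(t,x)$ consists of those with a unique solution, $\mathbb{E}\int_t^T\|\xi\|_2^4<\infty$, $\mathbb{E}\int_t^T\|\eta\|_2^8<\infty$, $\eta_i\equiv0$ if $\theta_i=0$, and $\lim_{s\to T-}X^u(s)=0$ a.s. The value function is $v(t,x)=\inf_{u\in\mathbb{A}(t,x)}\mathbb{E}\big[\int_t^T(\xi^\top\Lambda\xi+\alpha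 X^{u\top}\Sigma X^u)ds\big]$. *)

theory Defs
  imports "HOL-Probability.Probability"
begin

definition sym_mat :: "real^'n^'n \<Rightarrow> bool" where
  "sym_mat A \<longleftrightarrow> transpose A = A"

definition pos_def_mat :: "real^'n^'n \<Rightarrow> bool" where
  "pos_def_mat A \<longleftrightarrow> sym_mat A \<and> (\<forall>x. x \<noteq> 0 \<longrightarrow> 0 < x \<bullet> (A *v x))"

definition nonneg_def_mat :: "real^'n^'n \<Rightarrow> bool" where
  "nonneg_def_mat A \<longleftrightarrow> sym_mat A \<and> (\<forall>x. 0 \<le> x \<bullet> (A *v x))"

definition loewner_le :: "real^'n^'n \<Rightarrow> real^'n^'n \<Rightarrow> bool" where
  "loewner_le A B \<longleftrightarrow> nonneg_def_mat (B - A)"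

definition diag_mat :: "('n \<Rightarrow> real) \<Rightarrow> real^'n^'n" where
  "diag_mat d = (\<chi> i j. if i = j then d i else 0)"

definition cadlag_on :: "real \<Rightarrow> (real \<Rightarrow> 'a::topological_space) \<Rightarrow> bool" where
  "cadlag_on T f \<longleftrightarrow>
     (\<forall>s\<in>{0..<T}. (f \<longlongrightarrow> f s) (at_right s)) \<and>
     (\<forall>s\<in>{0<..T}. \<exists>l. (f \<longlongrightarrow> l) (at_left s))"

definition left_lim :: "(real \<Rightarrow> 'a::t2_space) \<Rightarrow> real \<Rightarrow> 'a" where
  "left_lim f s = Lim (at_left s) f"

definition liq_filtration ::
  "'w measure \<Rightarrow> (real \<Rightarrow> 'w \<Rightarrow> real^'n) \<Rightarrow> (real \<Rightarrow> 'w \<Rightarrow> real^'n) \<Rightarrow> real \<Rightarrow> 'w set set" where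
  "liq_filtration M P N s = sigma_sets (space M)
     ({P r -` B \<inter> space M | r B. 0 \<le> r \<and> r \<le> s \<and> B \<in> sets borel}
    \<union> {N r -` B \<inter> space M | r B. 0 \<le> r \<and> r < s \<and> B \<in> sets borel}
    \<union> {A. A \<subseteq> space M \<and> (\<exists>Z\<in>null_sets M. A \<subseteq> Z)})"

definition sq_int_cadlag_martingale ::
  "'w measure \<Rightarrow> (real \<Rightarrow> 'w set set) \<Rightarrow> real \<Rightarrow> (real \<Rightarrow> 'w \<Rightarrow> real^'n) \<Rightarrow> bool" where
  "sq_int_cadlag_martingale M F T X \<longleftrightarrow>
     (\<forall>s\<in>{0..T}. X s \<in> borel_measurable M) \<and>
     (\<forall>s\<in>{0..T}. \<forall>i. integrable M (\<lambda>\<omega>. (X s \<omega> $ i)^2)) \<and>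
     (\<forall>s\<in>{0..T}. X s \<in> measurable (sigma (space M) (F s)) borel) \<and>
     (\<forall>\<omega>\<in>space M. cadlag_on T (\<lambda>s. X s \<omega>)) \<and>
     (\<forall>r s i. 0 \<le> r \<longrightarrow> r \<le> s \<longrightarrow> s \<le> T \<longrightarrow> (\<forall>A\<in>F r.
        (\<integral>\<omega>. indicator A \<omega> * (X s \<omega> $ i) \<partial>completion M)
      = (\<integral>\<omega>. indicator A \<omega> * (X r \<omega> $ i) \<partial>completion M)))"

definition poisson_process_on ::
  "'w measure \<Rightarrow> real \<Rightarrow> real \<Rightarrow> (real \<Rightarrow> 'w \<Rightarrow> real) \<Rightarrow> bool" where
  "poisson_process_on M T th N \<longleftrightarrow>
     (\<forall>s\<in>{0..T}. N s \<in> borel_measurable M) \<and>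
     (\<forall>\<omega>\<in>space M. N 0 \<omega> = 0 \<and> cadlag_on T (\<lambda>s. N s \<omega>)) \<and>
     (\<forall>r s (k::nat). 0 \<le> r \<longrightarrow> r \<le> s \<longrightarrow> s \<le> T \<longrightarrow>
        measure M {\<omega>\<in>space M. N s \<omega> - N r \<omega> = real k}
          = exp (- (th * (s - r))) * (th * (s - r)) ^ k / fact k) \<and>
     (\<forall>(k::nat) (ts::nat \<Rightarrow> real). 0 \<le> ts 0 \<longrightarrow> (\<forall>j<k. ts j < ts (Suc j)) \<longrightarrow> ts k \<le> T \<longrightarrow>
        prob_space.indep_vars M (\<lambda>_. borel) (\<lambda>j \<omega>. N (ts (Suc j)) \<omega> - N (ts j) \<omega>) {..<k})"

text \<open>Sigma-algebras generated by P (index None) and by the components of pi (index Some i).\<close>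
definition liq_gen_sigma ::
  "'w measure \<Rightarrow> real \<Rightarrow> (real \<Rightarrow> 'w \<Rightarrow> real^'n) \<Rightarrow> (real \<Rightarrow> 'w \<Rightarrow> real^'n) \<Rightarrow> 'n option \<Rightarrow> 'w set set" where
  "liq_gen_sigma M T P N k = (case k of
      None \<Rightarrow> sigma_sets (space M) {P s -` B \<inter> space M | s B. s \<in> {0..T} \<and> B \<in> sets borel}
    | Some i \<Rightarrow> sigma_sets (space M)
        {(\<lambda>\<omega>. N s \<omega> $ i) -` B \<inter> space M | s B. s \<in> {0..T} \<and> B \<in> sets borel})"

definition liq_model ::
  "'w measure \<Rightarrow> real \<Rightarrow> real^'n^'n \<Rightarrow> ('n \<Rightarrow> real) \<Rightarrow> (real \<Rightarrow> 'w \<Rightarrow> real^'n) \<Rightarrow> (real \<Rightarrow> 'w \<Rightarrow> real^'n) \<Rightarrow> bool" where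
  "liq_model M T Sig th P N \<longleftrightarrow>
     prob_space M \<and>
     sq_int_cadlag_martingale M (liq_filtration M P N) T P \<and>
     (\<forall>s\<in>{0..T}. \<forall>i j.
        (\<integral>\<omega>. (P s \<omega> $ i - (\<integral>\<omega>'. P s \<omega>' $ i \<partial>M)) * (P s \<omega> $ j - (\<integral>\<omega>'. P s \<omega>' $ j \<partial>M)) \<partial>M)
          = s * Sig $ i $ j) \<and>
     (\<forall>i. poisson_process_on M T (th i) (\<lambda>s \<omega>. N s \<omega> $ i)) \<and>
     prob_space.indep_sets M (liq_gen_sigma M T P N) UNIV"

definition progressive ::
  "'w measure \<Rightarrow> (real \<Rightarrow> 'w set set) \<Rightarrow> real \<Rightarrow> real \<Rightarrow> (real \<Rightarrow> 'w \<Rightarrow> real^'n) \<Rightarrow> bool" where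
  "progressive M F t T xi \<longleftrightarrow>
     (\<forall>s\<in>{t..<T}. (\<lambda>(r, \<omega>). xi r \<omega>) \<in>
        borel_measurable (restrict_space lborel {t..s} \<Otimes>\<^sub>M sigma (space M) (F s)))"

definition predictable_sets ::
  "'w measure \<Rightarrow> (real \<Rightarrow> 'w set set) \<Rightarrow> real \<Rightarrow> real \<Rightarrow> (real \<times> 'w) set set" where
  "predictable_sets M F t T = sigma_sets ({t..<T} \<times> space M)
     ({{t} \<times> A | A. A \<in> F t} \<union> {{a<..b} \<times> A | a b A. t \<le> a \<and> a < b \<and> b < T \<and> A \<in> F a})"

definition predictable ::
  "'w measure \<Rightarrow> (real \<Rightarrow> 'w set set) \<Rightarrow> real \<Rightarrow> real \<Rightarrow> (real \<Rightarrow> 'w \<Rightarrow> real^'n) \<Rightarrow> bool" where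
  "predictable M F t T eta \<longleftrightarrow>
     (\<lambda>(r, \<omega>). eta r \<omega>) \<in> measurable (sigma ({t..<T} \<times> space M) (predictable_sets M F t T)) borel"

text \<open>Pathwise integral of eta against the counting process pi over (t,s].\<close>
definition jump_integral ::
  "(real \<Rightarrow> 'w \<Rightarrow> real^'n) \<Rightarrow> (real \<Rightarrow> 'w \<Rightarrow> real^'n) \<Rightarrow> real \<Rightarrow> real \<Rightarrow> 'w \<Rightarrow> 'n \<Rightarrow> real" where
  "jump_integral N eta t s \<omega> i =
     (\<Sum>r\<in>{r\<in>{t<..s}. N r \<omega> $ i \<noteq> left_lim (\<lambda>q. N q \<omega> $ i) r}.
        eta r \<omega> $ i * (N r \<omega> $ i - left_lim (\<lambda>q. N q \<omega> $ i) r))"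

text \<open>The solution of dX = - xi ds - eta dpi, X(t) = x.\<close>
definition liq_state ::
  "(real \<Rightarrow> 'w \<Rightarrow> real^'n) \<Rightarrow> real^'n \<Rightarrow> real \<Rightarrow> (real \<Rightarrow> 'w \<Rightarrow> real^'n) \<Rightarrow> (real \<Rightarrow> 'w \<Rightarrow> real^'n)
     \<Rightarrow> real \<Rightarrow> 'w \<Rightarrow> real^'n" where
  "liq_state N x t xi eta s \<omega> =
     (\<chi> i. x $ i - set_lebesgue_integral lborel {t..s} (\<lambda>r. xi r \<omega> $ i) - jump_integral N eta t s \<omega> i)"

definition liq_admissible ::
  "'w measure \<Rightarrow> (real \<Rightarrow> 'w \<Rightarrow> real^'n) \<Rightarrow> (real \<Rightarrow> 'w \<Rightarrow> real^'n) \<Rightarrow> ('n \<Rightarrow> real) \<Rightarrow> real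
     \<Rightarrow> real \<Rightarrow> real^'n \<Rightarrow> (real \<Rightarrow> 'w \<Rightarrow> real^'n) \<Rightarrow> (real \<Rightarrow> 'w \<Rightarrow> real^'n) \<Rightarrow> bool" where
  "liq_admissible M P N th T t x xi eta \<longleftrightarrow>
     progressive M (liq_filtration M P N) t T xi \<and>
     predictable M (liq_filtration M P N) t T eta \<and>
     (AE \<omega> in completion M. \<forall>s\<in>{t..<T}. \<forall>i. set_integrable lborel {t..s} (\<lambda>r. xi r \<omega> $ i)) \<and>
     (\<integral>\<^sup>+\<omega>. (\<integral>\<^sup>+r. indicator {t..<T} r * ennreal (norm (xi r \<omega>) ^ 4) \<partial>lborel) \<partial>completion M) < \<infinity> \<and>
     (\<integral>\<^sup>+\<omega>. (\<integral>\<^sup>+r. indicator {t..<T} r * ennreal (norm (eta r \<omega>) ^ 8) \<partial>lborel) \<partial>completion M) < \<infinity> \<and>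
     (\<forall>i. th i = 0 \<longrightarrow> (\<forall>r\<in>{t..<T}. \<forall>\<omega>\<in>space M. eta r \<omega> $ i = 0)) \<and>
     (AE \<omega> in completion M. ((\<lambda>s. liq_state N x t xi eta s \<omega>) \<longlongrightarrow> 0) (at_left T))"

definition liq_cost ::
  "'w measure \<Rightarrow> (real \<Rightarrow> 'w \<Rightarrow> real^'n) \<Rightarrow> real^'n^'n \<Rightarrow> real^'n^'n \<Rightarrow> real \<Rightarrow> real \<Rightarrow> real
     \<Rightarrow> real^'n \<Rightarrow> (real \<Rightarrow> 'w \<Rightarrow> real^'n) \<Rightarrow> (real \<Rightarrow> 'w \<Rightarrow> real^'n) \<Rightarrow> ennreal" where
  "liq_cost M N Lam Sig alpha T t x xi eta =
     (\<integral>\<^sup>+\<omega>. (\<integral>\<^sup>+r. indicator {t..<T} r *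
        ennreal (xi r \<omega> \<bullet> (Lam *v xi r \<omega>)
          + alpha * (liq_state N x t xi eta r \<omega> \<bullet> (Sig *v liq_state N x t xi eta r \<omega>))) \<partial>lborel)
      \<partial>completion M)"

definition liq_value ::
  "'w measure \<Rightarrow> (real \<Rightarrow> 'w \<Rightarrow> real^'n) \<Rightarrow> (real \<Rightarrow> 'w \<Rightarrow> real^'n) \<Rightarrow> ('n \<Rightarrow> real)
     \<Rightarrow> real^'n^'n \<Rightarrow> real^'n^'n \<Rightarrow> real \<Rightarrow> real \<Rightarrow> real \<Rightarrow> real^'n \<Rightarrow> ennreal" where
  "liq_value M P N th Lam Sig alpha T t x =
     (INF u \<in> {(xi, eta). liq_admissible M P N th T t x xi eta}.
        liq_cost M N Lam Sig alpha T t x (fst u) (snd u))"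

end

theory Submission
  imports Defs
begin

lemma nn_integral_cmult_le:
  fixes c :: real
  assumes c: "0 < c"
  shows "(\<integral>\<^sup>+x. ennreal c * f x \<partial>M) \<le> ennreal c * integral\<^sup>N M f"
  unfolding nn_integral_def[of M "\<lambda>x. ennreal c * f x"]
proof (rule SUP_least)
  fix g assume g: "g \<in> {g. simple_function M g \<and> g \<le> (\<lambda>x. ennreal c * f x)}"
  define h where "h = (\<lambda>x. ennreal (1/c) * g x)"
  have sh: "simple_function M h" unfolding h_def using g
    by (auto intro: simple_function_compose1[where g="\<lambda>y. ennreal (1/c) * y"])
  have cc: "ennreal (1/c) * ennreal c = 1" using c
    by (simp add: ennreal_mult[symmetric])
  have hf: "h \<le> f"
  proof (rule le_funI)
    fix x
    have "h x \<le> ennreal (1/c) * (ennreal c * f x)" unfolding h_def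
      using g by (auto simp: le_fun_def intro: mult_left_mono)
    also have "\<dots> = f x" by (simp add: mult.assoc[symmetric] cc)
    finally show "h x \<le> f x" .
  qed
  have gh: "g = (\<lambda>x. ennreal c * h x)"
    using c by (auto simp: h_def mult.assoc[symmetric] ennreal_mult[symmetric])
  have "integral\<^sup>S M g = ennreal c * integral\<^sup>S M h"
    by (subst gh) (simp add: sh)
  also have "\<dots> \<le> ennreal c * integral\<^sup>N M f"
    unfolding nn_integral_def using sh hf
    by (intro mult_left_mono SUP_upper) auto
  finally show "integral\<^sup>S M g \<le> ennreal c * integral\<^sup>N M f" .
qed

lemma diag_quad: "v \<bullet> (diag_mat d *v v) = (\<Sum>j\<in>UNIV. d j * (v $ j)^2)"
proof -
  have "(diag_mat d *v v) $ i = d i * v $ i" for i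
    unfolding diag_mat_def matrix_vector_mult_def
    by (simp add: if_distrib[where f="\<lambda>z. z * _"] cong: if_cong)
  then show ?thesis
    unfolding inner_vec_def by (simp add: power2_eq_square mult_ac)
qed

lemma cost_mono:
  fixes N :: "real \<Rightarrow> 'w \<Rightarrow> real^'n"
  assumes "\<And>v. v \<bullet> (Lam *v v) \<le> v \<bullet> (Lam' *v v)"
  shows "liq_cost M N Lam Sig alpha T t x xi eta \<le> liq_cost M N Lam' Sig alpha T t x xi eta"
  unfolding liq_cost_def
  by (intro nn_integral_mono mult_left_mono ennreal_leI) (auto simp: assms)

lemma cost_scale:
  fixes N :: "real \<Rightarrow> 'w \<Rightarrow> real^'n" and lam :: "'n \<Rightarrow> real"
  assumes lam: "\<forall>j. 0 < lam j" and a: "0 < a" and ab: "a \<le> b"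
    and Sig: "nonneg_def_mat Sig" and al: "0 \<le> alpha"
  shows "liq_cost M N (diag_mat (lam(i := b))) Sig alpha T t x xi eta
     \<le> ennreal (b/a) * liq_cost M N (diag_mat (lam(i := a))) Sig alpha T t x xi eta"
proof -
  have ba: "1 \<le> b/a" "0 < b/a" using a ab by auto
  have pt: "ennreal (v \<bullet> (diag_mat (lam(i := b)) *v v) + alpha * (w \<bullet> (Sig *v w)))
      \<le> ennreal (b/a) * ennreal (v \<bullet> (diag_mat (lam(i := a)) *v v) + alpha * (w \<bullet> (Sig *v w)))"
    for v w :: "real^'n"
  proof -
    have R: "0 \<le> alpha * (w \<bullet> (Sig *v w))" using Sig al by (simp add: nonneg_def_mat_def)
    have F: "0 \<le> v \<bullet> (diag_mat (lam(i := a)) *v v)" unfolding diag_quad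
      apply (intro sum_nonneg) using lam a by (simp add: less_imp_le)
    have S: "(\<Sum>j\<in>UNIV. (lam(i := b)) j * (v $ j)^2) \<le> (b/a) * (\<Sum>j\<in>UNIV. (lam(i := a)) j * (v $ j)^2)"
      unfolding sum_distrib_left
    proof (rule sum_mono)
      fix j
      show "(lam(i := b)) j * (v $ j)^2 \<le> (b/a) * ((lam(i := a)) j * (v $ j)^2)"
      proof (cases "j = i")
        case True then show ?thesis using a by simp
      next
        case False
        have "lam j * (v $ j)^2 \<le> (b/a) * (lam j * (v $ j)^2)"
          using mult_right_mono[OF ba(1), of "lam j * (v$j)^2"] lam by (simp add: less_imp_le)
        then show ?thesis using False by simp
      qed
    qed
    have R2: "alpha * (w \<bullet> (Sig *v w)) \<le> (b/a) * (alpha * (w \<bullet> (Sig *v w)))"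
      using mult_right_mono[OF ba(1) R] by simp
    have "v \<bullet> (diag_mat (lam(i := b)) *v v) + alpha * (w \<bullet> (Sig *v w))
       \<le> (b/a) * (v \<bullet> (diag_mat (lam(i := a)) *v v) + alpha * (w \<bullet> (Sig *v w)))"
      unfolding diag_quad using S R2 by (simp add: distrib_left)
    then have "ennreal (v \<bullet> (diag_mat (lam(i := b)) *v v) + alpha * (w \<bullet> (Sig *v w)))
       \<le> ennreal ((b/a) * (v \<bullet> (diag_mat (lam(i := a)) *v v) + alpha * (w \<bullet> (Sig *v w))))"
      by (rule ennreal_leI)
    also have "\<dots> = ennreal (b/a) * ennreal (v \<bullet> (diag_mat (lam(i := a)) *v v) + alpha * (w \<bullet> (Sig *v w)))"
      using ba F R by (intro ennreal_mult) auto
    finally show ?thesis .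
  qed
  let ?g = "\<lambda>\<omega> r. indicator {t..<T} r *
        ennreal (xi r \<omega> \<bullet> (diag_mat (lam(i := a)) *v xi r \<omega>)
          + alpha * (liq_state N x t xi eta r \<omega> \<bullet> (Sig *v liq_state N x t xi eta r \<omega>)))"
  have "liq_cost M N (diag_mat (lam(i := b))) Sig alpha T t x xi eta
      \<le> (\<integral>\<^sup>+\<omega>. (\<integral>\<^sup>+r. ennreal (b/a) * ?g \<omega> r \<partial>lborel) \<partial>completion M)"
    unfolding liq_cost_def
  proof (intro nn_integral_mono)
    fix \<omega> r
    show "indicator {t..<T} r *
        ennreal (xi r \<omega> \<bullet> (diag_mat (lam(i := b)) *v xi r \<omega>)
          + alpha * (liq_state N x t xi eta r \<omega> \<bullet> (Sig *v liq_state N x t xi eta r \<omega>)))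
       \<le> ennreal (b/a) * ?g \<omega> r"
      using pt[of "xi r \<omega>" "liq_state N x t xi eta r \<omega>"]
      by (auto simp: indicator_def)
  qed
  also have "\<dots> \<le> (\<integral>\<^sup>+\<omega>. ennreal (b/a) * (\<integral>\<^sup>+r. ?g \<omega> r \<partial>lborel) \<partial>completion M)"
    by (intro nn_integral_mono nn_integral_cmult_le ba)
  also have "\<dots> \<le> ennreal (b/a) * liq_cost M N (diag_mat (lam(i := a))) Sig alpha T t x xi eta"
    unfolding liq_cost_def by (intro nn_integral_cmult_le ba)
  finally show ?thesis .
qed

theorem proposition4p11:
  fixes M :: "'w measure" and P N :: "real \<Rightarrow> 'w \<Rightarrow> real^'n"
    and th :: "'n \<Rightarrow> real" and Sig :: "real^'n^'n"
    and alpha T t :: real and x :: "real^'n"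
  assumes "0 < T" and "0 \<le> alpha" and "nonneg_def_mat Sig" and "\<forall>i. 0 \<le> th i"
    and "liq_model M T Sig th P N"
    and "0 \<le> t" and "t < T"
  shows "(\<forall>Lam Lam'. pos_def_mat Lam \<longrightarrow> pos_def_mat Lam' \<longrightarrow> loewner_le Lam Lam' \<longrightarrow>
            liq_value M P N th Lam Sig alpha T t x \<le> liq_value M P N th Lam' Sig alpha T t x)
       \<and> (\<forall>(lam :: 'n \<Rightarrow> real) i a b. (\<forall>j. 0 < lam j) \<longrightarrow> 0 < a \<longrightarrow> a \<le> b \<longrightarrow>
            liq_value M P N th (diag_mat (lam(i := b))) Sig alpha T t x / ennreal b
              \<le> liq_value M P N th (diag_mat (lam(i := a))) Sig alpha T t x / ennreal a)"
proof (intro conjI allI impI)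
  fix Lam Lam' :: "real^'n^'n"
  assume "loewner_le Lam Lam'"
  then have q: "v \<bullet> (Lam *v v) \<le> v \<bullet> (Lam' *v v)" for v
    unfolding loewner_le_def nonneg_def_mat_def
    by (auto simp: matrix_vector_mult_diff_rdistrib inner_diff_right)
  show "liq_value M P N th Lam Sig alpha T t x \<le> liq_value M P N th Lam' Sig alpha T t x"
    unfolding liq_value_def
  proof (rule INF_mono)
    fix u assume "u \<in> {(xi, eta). liq_admissible M P N th T t x xi eta}"
    then show "\<exists>u'\<in>{(xi, eta). liq_admissible M P N th T t x xi eta}.
       liq_cost M N Lam Sig alpha T t x (fst u') (snd u') \<le> liq_cost M N Lam' Sig alpha T t x (fst u) (snd u)"
      using cost_mono[OF q] by blast
  qed
next
  fix lam :: "'n \<Rightarrow> real" and i and a b :: real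
  assume lam: "\<forall>j. 0 < lam j" and a: "0 < a" and ab: "a \<le> b"
  have b: "0 < b" using a ab by linarith
  let ?A = "{(xi, eta). liq_admissible M P N th T t x xi eta}"
  let ?cb = "\<lambda>u. liq_cost M N (diag_mat (lam(i := b))) Sig alpha T t x (fst u) (snd u)"
  let ?ca = "\<lambda>u. liq_cost M N (diag_mat (lam(i := a))) Sig alpha T t x (fst u) (snd u)"
  have k1: "ennreal (a/b) * ennreal (b/a) = 1" using a b
    by (simp add: ennreal_mult[symmetric])
  have "ennreal (a/b) * (INF u\<in>?A. ?cb u) \<le> (INF u\<in>?A. ?ca u)"
  proof (rule INF_greatest)
    fix u assume "u \<in> ?A"
    have "ennreal (a/b) * (INF u\<in>?A. ?cb u) \<le> ennreal (a/b) * ?cb u"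
      using \<open>u \<in> ?A\<close> by (intro mult_left_mono INF_lower) auto
    also have "\<dots> \<le> ennreal (a/b) * (ennreal (b/a) * ?ca u)"
      by (intro mult_left_mono cost_scale lam a ab assms(3) assms(2)) auto
    also have "\<dots> = ?ca u" by (simp add: mult.assoc[symmetric] k1)
    finally show "ennreal (a/b) * (INF u\<in>?A. ?cb u) \<le> ?ca u" .
  qed
  then have X: "ennreal (a/b) * liq_value M P N th (diag_mat (lam(i := b))) Sig alpha T t x
      \<le> liq_value M P N th (diag_mat (lam(i := a))) Sig alpha T t x"
    unfolding liq_value_def by simp
  have k2: "ennreal (a/b) * ennreal (1/a) = ennreal (1/b)" using a b
    by (simp add: ennreal_mult[symmetric])
  have "liq_value M P N th (diag_mat (lam(i := b))) Sig alpha T t x / ennreal b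
      = ennreal (1/b) * liq_value M P N th (diag_mat (lam(i := b))) Sig alpha T t x"
    using b unfolding divide_ennreal_def by (simp only: inverse_ennreal mult.commute inverse_eq_divide)
  also have "\<dots> = ennreal (1/a) * (ennreal (a/b) * liq_value M P N th (diag_mat (lam(i := b))) Sig alpha T t x)"
    by (simp add: mult.assoc[symmetric] k2 mult.commute[of "ennreal (1/a)"])
  also have "\<dots> \<le> ennreal (1/a) * liq_value M P N th (diag_mat (lam(i := a))) Sig alpha T t x"
    by (intro mult_left_mono X) auto
  also have "\<dots> = liq_value M P N th (diag_mat (lam(i := a))) Sig alpha T t x / ennreal a"
    using a unfolding divide_ennreal_def by (simp only: inverse_ennreal mult.commute inverse_eq_divide)
  finally show "liq_value M P N th (diag_mat (lam(i := b))) Sig alpha T t x / ennreal b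
              \<le> liq_value M P N th (diag_mat (lam(i := a))) Sig alpha T t x / ennreal a" .
qed

end
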